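(* Let $G$ and $H$ be finite simple graphs, let $n_2$ be the order of $H$, and let $u\in V(G)$, $v\in V(H)$. Then \[\mathrm{dp}_{G[H]}((u,v))=\big(\mathrm{dp}_G(u)\big)^{\curlywedge\times n_2}\,\mathrm{dp}(H)+x^{(\deg_G u)\,n_2}\,\mathrm{dp}_H(v).\]
   Context: For a vertex $w$ of a simple graph $\Gamma$, the degree polynomial $\mathrm{dp}_\Gamma(w)\in\mathbb{Z}[x]$ is the polynomial in which the coefficient of $x^{i}$ is the number of neighbors of $w$ in $\Gamma$ having degree $i$ in $\Gamma$ ($\mathrm{dp}_\Gamma(w)=0$ if $w$ is isolated). The degree polynomial of the graph $\Gamma$ is $\mathrm{dp}(\Gamma)=\sum_{i\ge0} t_i x^i$, where $t_i$ is the number of vertices of $\Gamma$ of degree $i$. For a polynomial $f=\sum_i a_i x^i$ with nonnegative integer coefficients and $n\in\mathbb{N}$, $f^{\curlywedge\times n}=\sum_i a_i x^{in}$ (and $0^{\curlywedge\times n}=0$). The lexicographic product $G[H]$ is the simple graph on $V(G)\times V(H)$ in which $(u_1,v_1)\sim(u_2,v_2)$ if and only if either $u_1\sim u_2$ in $G$, or $u_1=u_2$ and $v_1\sim v_2$ in $H$. *)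

theory Defs
  imports "HOL-Computational_Algebra.Polynomial"
begin

definition simple_graph :: "'a set \<Rightarrow> ('a \<Rightarrow> 'a \<Rightarrow> bool) \<Rightarrow> bool" where
  "simple_graph V E \<longleftrightarrow> finite V \<and> (\<forall>x y. E x y \<longrightarrow> x \<in> V \<and> y \<in> V)
     \<and> (\<forall>x y. E x y \<longrightarrow> E y x) \<and> (\<forall>x. \<not> E x x)"

definition nbhd :: "'a set \<Rightarrow> ('a \<Rightarrow> 'a \<Rightarrow> bool) \<Rightarrow> 'a \<Rightarrow> 'a set" where
  "nbhd V E w = {y \<in> V. E w y}"

definition deg :: "'a set \<Rightarrow> ('a \<Rightarrow> 'a \<Rightarrow> bool) \<Rightarrow> 'a \<Rightarrow> nat" where
  "deg V E w = card (nbhd V E w)"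

definition dp_vertex :: "'a set \<Rightarrow> ('a \<Rightarrow> 'a \<Rightarrow> bool) \<Rightarrow> 'a \<Rightarrow> nat poly" where
  "dp_vertex V E w = (\<Sum>y\<in>nbhd V E w. monom 1 (deg V E y))"

definition dp_graph :: "'a set \<Rightarrow> ('a \<Rightarrow> 'a \<Rightarrow> bool) \<Rightarrow> nat poly" where
  "dp_graph V E = (\<Sum>y\<in>V. monom 1 (deg V E y))"

text \<open>f^{curlywedge x n} = sum_i a_i x^(i n).\<close>
definition stretch :: "nat poly \<Rightarrow> nat \<Rightarrow> nat poly" where
  "stretch f n = (\<Sum>i\<le>degree f. monom (coeff f i) (i * n))"

definition lex_verts :: "'a set \<Rightarrow> 'b set \<Rightarrow> ('a \<times> 'b) set" where
  "lex_verts VG VH = VG \<times> VH"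

definition lex_edges :: "('a \<Rightarrow> 'a \<Rightarrow> bool) \<Rightarrow> ('b \<Rightarrow> 'b \<Rightarrow> bool)
    \<Rightarrow> ('a \<times> 'b) \<Rightarrow> ('a \<times> 'b) \<Rightarrow> bool" where
  "lex_edges EG EH p q \<longleftrightarrow> EG (fst p) (fst q) \<or> (fst p = fst q \<and> EH (snd p) (snd q))"

end

theory Submission
  imports Defs
begin

lemma stretch_alt:
  assumes "degree f \<le> K"
  shows "stretch f n = (\<Sum>i\<le>K. monom (coeff f i) (i*n))"
  unfolding stretch_def
  by (rule sum.mono_neutral_left) (use assms in \<open>auto simp: coeff_eq_0\<close>)

lemma stretch_add: "stretch (f+g) n = stretch f n + stretch g n"
proof -
  let ?K = "max (degree f) (degree g)"
  have "degree (f+g) \<le> ?K" by (rule degree_add_le) auto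
  then have "stretch (f+g) n = (\<Sum>i\<le>?K. monom (coeff (f+g) i) (i*n))" by (rule stretch_alt)
  also have "\<dots> = (\<Sum>i\<le>?K. monom (coeff f i) (i*n)) + (\<Sum>i\<le>?K. monom (coeff g i) (i*n))"
    by (simp add: add_monom[symmetric] sum.distrib)
  also have "\<dots> = stretch f n + stretch g n"
    by (subst (1 2) stretch_alt[symmetric]) auto
  finally show ?thesis .
qed

lemma stretch_zero: "stretch 0 n = 0"
  by (simp add: stretch_def)

lemma stretch_monom: "stretch (monom 1 d) n = monom 1 (d*n)"
proof -
  have "stretch (monom 1 d) n = (\<Sum>i\<le>d. monom (coeff (monom (1::nat) d) i) (i*n))"
    by (rule stretch_alt) (simp add: degree_monom_eq)
  also have "\<dots> = (\<Sum>i\<le>d. if i = d then monom 1 (d*n) else 0)"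
    by (rule sum.cong) (auto simp: coeff_monom)
  also have "\<dots> = monom 1 (d*n)" by simp
  finally show ?thesis .
qed

lemma stretch_sum:
  assumes "finite A"
  shows "stretch (\<Sum>a\<in>A. monom 1 (d a)) n = (\<Sum>a\<in>A. monom 1 (d a * n))"
  using assms
  by (induction A rule: finite_induct) (auto simp: stretch_zero stretch_add stretch_monom simp del: One_nat_def)

lemma lex_nbhd:
  assumes G: "simple_graph VG EG" and "a \<in> VG"
  shows "nbhd (lex_verts VG VH) (lex_edges EG EH) (a, b)
       = (nbhd VG EG a \<times> VH) \<union> ({a} \<times> nbhd VH EH b)"
  using assms unfolding nbhd_def lex_verts_def lex_edges_def simple_graph_def by auto

lemma lex_deg:
  assumes G: "simple_graph VG EG" and H: "simple_graph VH EH" and "a \<in> VG"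
  shows "deg (lex_verts VG VH) (lex_edges EG EH) (a, b)
       = deg VG EG a * card VH + deg VH EH b"
proof -
  have fG: "finite (nbhd VG EG a)" using G unfolding simple_graph_def nbhd_def by auto
  have fH: "finite VH" "finite (nbhd VH EH b)" using H unfolding simple_graph_def nbhd_def by auto
  have disj: "(nbhd VG EG a \<times> VH) \<inter> ({a} \<times> nbhd VH EH b) = {}"
    using G unfolding simple_graph_def nbhd_def by auto
  show ?thesis
    unfolding deg_def lex_nbhd[OF assms(1,3)]
    by (subst card_Un_disjoint) (use fG fH disj in \<open>auto simp: card_cartesian_product\<close>)
qed

theorem theorem4p18:
  fixes VG :: "'a set" and EG :: "'a \<Rightarrow> 'a \<Rightarrow> bool"
    and VH :: "'b set" and EH :: "'b \<Rightarrow> 'b \<Rightarrow> bool"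
  assumes "simple_graph VG EG" and "simple_graph VH EH"
    and "u \<in> VG" and "v \<in> VH"
  shows "dp_vertex (lex_verts VG VH) (lex_edges EG EH) (u, v)
         = stretch (dp_vertex VG EG u) (card VH) * dp_graph VH EH
           + monom 1 (deg VG EG u * card VH) * dp_vertex VH EH v"
proof -
  let ?n = "card VH"
  let ?V = "lex_verts VG VH" and ?E = "lex_edges EG EH"
  have G: "simple_graph VG EG" and H: "simple_graph VH EH" by fact+
  have fG: "finite (nbhd VG EG u)" using G unfolding simple_graph_def nbhd_def by auto
  have fH: "finite VH" "finite (nbhd VH EH v)" using H unfolding simple_graph_def nbhd_def by auto
  have NG: "nbhd VG EG u \<subseteq> VG" by (auto simp: nbhd_def)
  have disj: "(nbhd VG EG u \<times> VH) \<inter> ({u} \<times> nbhd VH EH v) = {}"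
    using G unfolding simple_graph_def nbhd_def by auto
  have aux: "deg ?V ?E (a, b) = deg VG EG a * ?n + deg VH EH b" if "a \<in> nbhd VG EG u" for a b
    using lex_deg[OF G H, of a b] NG that by auto
  have "dp_vertex ?V ?E (u, v) = (\<Sum>p\<in>nbhd VG EG u \<times> VH. monom 1 (deg ?V ?E p))
      + (\<Sum>p\<in>{u} \<times> nbhd VH EH v. monom 1 (deg ?V ?E p))"
    unfolding dp_vertex_def lex_nbhd[OF G assms(3)]
    by (rule sum.union_disjoint) (use fG fH disj in auto)
  also have "((\<Sum>p\<in>nbhd VG EG u \<times> VH. monom 1 (deg ?V ?E p)) :: nat poly)
      = (\<Sum>a\<in>nbhd VG EG u. \<Sum>b\<in>VH. monom 1 (deg VG EG a * ?n) * monom 1 (deg VH EH b))"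
    unfolding sum.cartesian_product
    by (rule sum.cong) (use NG aux in \<open>auto simp: mult_monom\<close>)
  also have "\<dots> = stretch (dp_vertex VG EG u) ?n * dp_graph VH EH"
    unfolding dp_vertex_def dp_graph_def stretch_sum[OF fG]
    by (simp add: sum_distrib_left sum_distrib_right sum.swap[of _ VH])
  also have "((\<Sum>p\<in>{u} \<times> nbhd VH EH v. monom 1 (deg ?V ?E p)) :: nat poly)
      = (\<Sum>b\<in>nbhd VH EH v. monom 1 (deg VG EG u * ?n) * monom 1 (deg VH EH b))"
  proof -
    have "{u} \<times> nbhd VH EH v = Pair u ` nbhd VH EH v" by auto
    then show ?thesis
      by (simp add: sum.reindex inj_on_def lex_deg[OF G H assms(3)] mult_monom)
  qed
  also have "\<dots> = monom 1 (deg VG EG u * ?n) * dp_vertex VH EH v"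
    unfolding dp_vertex_def by (simp add: sum_distrib_left)
  finally show ?thesis .
qed

end
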